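(* Let $G$ be a nontrivial connected graph of order $n$ and maximum degree $\Delta(G)$. Then $$\max\{\Delta(G),\operatorname{diam}(G)\}\leq prc(G)\leq \chi'(G)+(n-1-\Delta(G)),$$ where the right-hand side equals $n$ if $G$ is class 2 and equals $n-1$ if $G$ is class 1.
   Context: All graphs are simple, finite and undirected. A path in an edge-coloured graph is a rainbow path if its edges receive pairwise distinct colours. An edge-colouring is proper if adjacent edges receive distinct colours. A connected graph $G$ with a proper edge-colouring is properly rainbow connected if every two distinct vertices are joined by a rainbow path. The proper rainbow connection number $prc(G)$ of a nontrivial connected graph $G$ is the minimum number of colours in a proper edge-colouring making $G$ properly rainbow connected. $\chi'(G)$ is the chromatic index; by Vizing's theorem $\chi'(G)\in\{\Delta(G),\Delta(G)+1\}$, and $G$ is class 1 if $\chi'(G)=\Delta(G)$ and class 2 otherwise. $\operatorname{diam}(G)$ is the diameter. *)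

theory Defs
  imports Main
begin

definition simple_graph :: "'a set \<Rightarrow> 'a set set \<Rightarrow> bool" where
  "simple_graph V E \<longleftrightarrow> finite V \<and> (\<forall>e\<in>E. e \<subseteq> V \<and> card e = 2)"

definition adj :: "'a set set \<Rightarrow> 'a \<Rightarrow> 'a \<Rightarrow> bool" where
  "adj E u v \<longleftrightarrow> {u, v} \<in> E"

fun path_edges :: "'a list \<Rightarrow> 'a set list" where
  "path_edges (x # y # xs) = {x, y} # path_edges (y # xs)"
| "path_edges _ = []"

definition is_path :: "'a set \<Rightarrow> 'a set set \<Rightarrow> 'a list \<Rightarrow> 'a \<Rightarrow> 'a \<Rightarrow> bool" where
  "is_path V E p u v \<longleftrightarrow> p \<noteq> [] \<and> hd p = u \<and> last p = v \<and> set p \<subseteq> V \<and> distinct p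
     \<and> (\<forall>e \<in> set (path_edges p). e \<in> E)"

definition connected_graph :: "'a set \<Rightarrow> 'a set set \<Rightarrow> bool" where
  "connected_graph V E \<longleftrightarrow> (\<forall>u\<in>V. \<forall>v\<in>V. \<exists>p. is_path V E p u v)"

definition degree :: "'a set set \<Rightarrow> 'a \<Rightarrow> nat" where
  "degree E v = card {e \<in> E. v \<in> e}"

definition max_degree :: "'a set \<Rightarrow> 'a set set \<Rightarrow> nat" where
  "max_degree V E = Max (degree E ` V)"

definition dist :: "'a set \<Rightarrow> 'a set set \<Rightarrow> 'a \<Rightarrow> 'a \<Rightarrow> nat" where
  "dist V E u v = (LEAST k. \<exists>p. is_path V E p u v \<and> length (path_edges p) = k)"

definition diam :: "'a set \<Rightarrow> 'a set set \<Rightarrow> nat" where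
  "diam V E = Max {dist V E u v | u v. u \<in> V \<and> v \<in> V}"

definition proper_edge_colouring :: "'a set set \<Rightarrow> nat \<Rightarrow> ('a set \<Rightarrow> nat) \<Rightarrow> bool" where
  "proper_edge_colouring E k c \<longleftrightarrow> c ` E \<subseteq> {..<k}
     \<and> (\<forall>e\<in>E. \<forall>f\<in>E. e \<noteq> f \<and> e \<inter> f \<noteq> {} \<longrightarrow> c e \<noteq> c f)"

definition chromatic_index :: "'a set set \<Rightarrow> nat" where
  "chromatic_index E = (LEAST k. \<exists>c. proper_edge_colouring E k c)"

definition rainbow_path :: "'a set \<Rightarrow> 'a set set \<Rightarrow> ('a set \<Rightarrow> nat) \<Rightarrow> 'a list \<Rightarrow> 'a \<Rightarrow> 'a \<Rightarrow> bool" where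
  "rainbow_path V E c p u v \<longleftrightarrow> is_path V E p u v \<and> distinct (map c (path_edges p))"

definition properly_rainbow_connected :: "'a set \<Rightarrow> 'a set set \<Rightarrow> ('a set \<Rightarrow> nat) \<Rightarrow> bool" where
  "properly_rainbow_connected V E c \<longleftrightarrow>
     (\<forall>u\<in>V. \<forall>v\<in>V. u \<noteq> v \<longrightarrow> (\<exists>p. rainbow_path V E c p u v))"

definition prc :: "'a set \<Rightarrow> 'a set set \<Rightarrow> nat" where
  "prc V E = (LEAST k. \<exists>c. proper_edge_colouring E k c \<and> properly_rainbow_connected V E c)"

definition class1 :: "'a set \<Rightarrow> 'a set set \<Rightarrow> bool" where
  "class1 V E \<longleftrightarrow> chromatic_index E = max_degree V E"

definition class2 :: "'a set \<Rightarrow> 'a set set \<Rightarrow> bool" where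
  "class2 V E \<longleftrightarrow> \<not> class1 V E"

end

theory Submission
  imports Defs
begin
lemma length_path_edges: "length (path_edges p) = length p - 1"
  by (induction p rule: path_edges.induct) auto

lemma path_edges_nth: "i < length (path_edges p) \<Longrightarrow> path_edges p ! i = {p!i, p!Suc i}"
proof (induction p arbitrary: i rule: path_edges.induct)
  case (1 x y xs)
  then show ?case by (cases i) auto
qed auto

lemma set_path_edges: "set (path_edges p) = {{p!i, p!Suc i} | i. Suc i < length p}"
proof
  show "set (path_edges p) \<subseteq> {{p!i, p!Suc i} | i. Suc i < length p}"
  proof
    fix e assume "e \<in> set (path_edges p)"
    then obtain i where "i < length (path_edges p)" "e = path_edges p ! i" by (auto simp: in_set_conv_nth)
    then show "e \<in> {{p!i, p!Suc i} | i. Suc i < length p}"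
      using path_edges_nth[of i p] length_path_edges[of p] by auto
  qed
next
  show "{{p!i, p!Suc i} | i. Suc i < length p} \<subseteq> set (path_edges p)"
  proof
    fix e assume "e \<in> {{p!i, p!Suc i} | i. Suc i < length p}"
    then obtain i where i: "Suc i < length p" "e = {p!i, p!Suc i}" by auto
    then have "i < length (path_edges p)" using length_path_edges[of p] by auto
    then show "e \<in> set (path_edges p)" using path_edges_nth[of i p] i
      by (metis nth_mem)
  qed
qed

definition miss :: "'a set set \<Rightarrow> ('a set \<Rightarrow> nat) \<Rightarrow> 'a \<Rightarrow> nat \<Rightarrow> bool" where
  "miss F f z a \<longleftrightarrow> (\<forall>e\<in>F. z \<in> e \<longrightarrow> f e \<noteq> a)"

lemma proper_eq:
  assumes "proper_edge_colouring F k f" "e1 \<in> F" "e2 \<in> F" "z \<in> e1" "z \<in> e2" "f e1 = f e2"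
  shows "e1 = e2"
  using assms unfolding proper_edge_colouring_def by blast

lemma card2_obtain:
  assumes "card e = 2" "z \<in> e"
  obtains w where "e = {z, w}" "w \<noteq> z"
proof -
  from assms(1) obtain a b where ab: "e = {a,b}" "a \<noteq> b" by (auto simp: card_2_iff)
  then show ?thesis using that assms(2) by (metis insert_commute insertE singletonD)
qed

lemma kempe:
  assumes fin: "finite F" and two: "\<forall>e\<in>F. card e = 2" and pr: "proper_edge_colouring F k f"
    and ab: "\<alpha> < k" "\<beta> < k" "\<alpha> \<noteq> \<beta>" and my: "miss F f y \<alpha>" and nmy: "\<not> miss F f y \<beta>"
  shows "\<exists>f' u. proper_edge_colouring F k f' \<and> miss F f' y \<beta>
            \<and> (\<forall>z. z \<noteq> y \<and> z \<noteq> u \<and> miss F f' z \<beta> \<longrightarrow> miss F f z \<beta>)"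
proof -
  define H where "H = {e\<in>F. f e = \<alpha> \<or> f e = \<beta>}"
  define A where "A = insert y (\<Union>F)"
  define Ps where "Ps = {p. p \<noteq> [] \<and> hd p = y \<and> distinct p \<and> set p \<subseteq> A
      \<and> (\<forall>i. Suc i < length p \<longrightarrow> {p!i, p!Suc i} \<in> H)}"
  have HF: "H \<subseteq> F" unfolding H_def by auto
  have "\<forall>e\<in>F. finite e" using two by (metis card.infinite zero_neq_numeral)
  then have finA: "finite A" unfolding A_def using fin by simp
  have "Ps \<subseteq> {xs. set xs \<subseteq> A \<and> length xs \<le> card A}"
  proof
    fix p assume "p \<in> Ps"
    then have "set p \<subseteq> A" "distinct p" unfolding Ps_def by auto
    then show "p \<in> {xs. set xs \<subseteq> A \<and> length xs \<le> card A}"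
      using distinct_card[of p] card_mono[OF finA \<open>set p \<subseteq> A\<close>] by simp
  qed
  then have finPs: "finite Ps" using finite_lists_length_le[OF finA] finite_subset by blast
  have yP: "[y] \<in> Ps" unfolding Ps_def A_def by auto
  have "Max (length ` Ps) \<in> length ` Ps" using finPs yP by (intro Max_in) auto
  then obtain p where pP: "p \<in> Ps" and plen: "length p = Max (length ` Ps)" by auto
  have pmax: "\<And>q. q \<in> Ps \<Longrightarrow> length q \<le> length p"
    unfolding plen using finPs by simp
  have pne: "p \<noteq> []" and p0: "p!0 = y" and pd: "distinct p" and pA: "set p \<subseteq> A"
    and pH: "\<And>i. Suc i < length p \<Longrightarrow> {p!i, p!Suc i} \<in> H"
    using pP unfolding Ps_def by (auto simp: hd_conv_nth)
  define m where "m = length p - 1"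
  define u where "u = p!m"
  have mlen: "length p = Suc m" using pne unfolding m_def by simp
  have ext: "w \<in> set p" if "{u,w} \<in> H" for w
  proof (rule ccontr)
    assume wn: "w \<notin> set p"
    define q where "q = p @ [w]"
    have "q \<in> Ps" unfolding Ps_def
    proof (intro CollectI conjI allI impI)
      show "q \<noteq> []" unfolding q_def by simp
      show "hd q = y" unfolding q_def using pne pP unfolding Ps_def by simp
      show "distinct q" unfolding q_def using pd wn by simp
      have "w \<in> \<Union>F" using that HF by auto
      then show "set q \<subseteq> A" unfolding q_def A_def using pA A_def by auto
      fix i assume i: "Suc i < length q"
      show "{q!i, q!Suc i} \<in> H"
      proof (cases "Suc i < length p")
        case True then show ?thesis unfolding q_def using pH[OF True] by (simp add: nth_append)
      next
        case False
        then have "i = m" using i mlen unfolding q_def by simp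
        then show ?thesis unfolding q_def using that mlen u_def by (simp add: nth_append)
      qed
    qed
    then show False using pmax[of q] unfolding q_def by simp
  qed
  from nmy obtain ey where ey: "ey \<in> F" "y \<in> ey" "f ey = \<beta>" unfolding miss_def by auto
  obtain w where w: "ey = {y,w}" "w \<noteq> y" using card2_obtain[of ey y] two ey by blast
  have m1: "m \<ge> 1"
  proof (rule ccontr)
    assume "\<not> m \<ge> 1"
    then have "m = 0" by simp
    then have "u = y" "set p = {y}" using p0 mlen u_def
      by (auto simp: length_Suc_conv)
    moreover have "{u,w} \<in> H" using ey w \<open>u = y\<close> unfolding H_def by auto
    ultimately show False using ext w by auto
  qed
  define S where "S = set (path_edges p)"
  have S_eq: "S = {{p!i, p!Suc i} | i. Suc i < length p}" unfolding S_def by (rule set_path_edges)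
  have SH: "S \<subseteq> H" unfolding S_eq using pH by auto
  have S_vert: "z \<in> set p" if "e \<in> S" "z \<in> e" for e z
    using that unfolding S_eq by auto
  have fH: "f e = \<alpha> \<or> f e = \<beta>" if "e \<in> H" for e using that unfolding H_def by auto
  have e01: "{p!0, p!1} \<in> H" using pH[of 0] m1 mlen by simp
  have at_y: "e = {p!0, p!1}" if "e \<in> H" "y \<in> e" for e
  proof -
    have "f {p!0, p!1} \<noteq> \<alpha>" using my e01 HF p0 unfolding miss_def by auto
    then have c1: "f {p!0, p!1} = \<beta>" using fH[OF e01] by auto
    have "f e \<noteq> \<alpha>" using my that HF unfolding miss_def by auto
    then have "f e = \<beta>" using fH[OF that(1)] by auto
    then show ?thesis using proper_eq[OF pr, of e "{p!0, p!1}" y] that HF e01 c1 p0 by auto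
  qed
  have internal: "e = {p!(i-1), p!i} \<or> e = {p!i, p!Suc i}"
    if i: "0 < i" "i < m" and e: "e \<in> H" "p!i \<in> e" for i e
  proof -
    define a where "a = {p!(i-1), p!i}"
    define b where "b = {p!i, p!Suc i}"
    have aH: "a \<in> H" unfolding a_def using pH[of "i-1"] i mlen by simp
    have bH: "b \<in> H" unfolding b_def using pH[of i] i mlen by simp
    have "p!(i-1) \<noteq> p!i" "p!(i-1) \<noteq> p!Suc i"
      using pd i mlen by (auto simp: nth_eq_iff_index_eq)
    then have "a \<noteq> b" unfolding a_def b_def by (metis insert_iff doubleton_eq_iff)
    then have "f a \<noteq> f b" using proper_eq[OF pr, of a b "p!i"] aH bH HF unfolding a_def b_def by auto
    then have "f e = f a \<or> f e = f b" using fH aH bH e by metis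
    then show ?thesis using proper_eq[OF pr, of e a "p!i"] proper_eq[OF pr, of e b "p!i"] aH bH e HF
      unfolding a_def b_def by auto
  qed
  have K': "e \<in> S" if j: "j < m" and e: "e \<in> H" "p!j \<in> e" for j e
  proof (cases "j = 0")
    case True
    then have "e = {p!0, p!1}" using at_y e p0 by auto
    then show ?thesis unfolding S_eq using m1 mlen by fastforce
  next
    case False
    then have "e = {p!(j-1), p!j} \<or> e = {p!j, p!Suc j}" using internal[of j e] j e by auto
    then show ?thesis
    proof
      assume "e = {p!(j-1), p!j}"
      then have "e = {p!(j-1), p!Suc (j-1)}" using False by simp
      then show ?thesis unfolding S_eq using j mlen False by fastforce
    next
      assume "e = {p!j, p!Suc j}"
      then show ?thesis unfolding S_eq using j mlen by fastforce
    qed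
  qed
  have K: "e \<in> S" if z: "z \<in> set p" and e: "e \<in> H" "z \<in> e" for z e
  proof -
    obtain j where j: "j < length p" "z = p!j" using z by (auto simp: in_set_conv_nth)
    show ?thesis
    proof (cases "j < m")
      case True then show ?thesis using K' e j by auto
    next
      case False
      then have "j = m" using j mlen by simp
      then have "z = u" using j u_def by simp
      obtain w' where w': "e = {u, w'}" "w' \<noteq> u" using card2_obtain[of e u] two e HF \<open>z = u\<close> by blast
      then have "w' \<in> set p" using ext e by auto
      then obtain j' where j': "j' < length p" "w' = p!j'" by (auto simp: in_set_conv_nth)
      have "j' \<noteq> m" using w' j' u_def by auto
      then have "j' < m" using j' mlen by simp
      then show ?thesis using K'[of j' e] e w' j' by auto
    qed
  qed
  define f' where "f' e = (if e \<in> S then (if f e = \<alpha> then \<beta> else \<alpha>) else f e)" for e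
  have f'S: "f' e = \<alpha> \<or> f' e = \<beta>" if "e \<in> S" for e using that unfolding f'_def by auto
  have prop': "proper_edge_colouring F k f'"
    unfolding proper_edge_colouring_def
  proof (intro conjI ballI impI)
    show "f' ` F \<subseteq> {..<k}"
      using pr ab unfolding f'_def proper_edge_colouring_def by auto
    fix e1 e2 assume e12: "e1 \<in> F" "e2 \<in> F" "e1 \<noteq> e2 \<and> e1 \<inter> e2 \<noteq> {}"
    then obtain z where z: "z \<in> e1" "z \<in> e2" by auto
    have ne: "f e1 \<noteq> f e2" using proper_eq[OF pr] e12 z by blast
    show "f' e1 \<noteq> f' e2"
    proof (cases "e1 \<in> S")
      case T1: True
      show ?thesis
      proof (cases "e2 \<in> S")
        case True
        then show ?thesis using T1 ne fH SH unfolding f'_def by (metis subsetD)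
      next
        case False
        have "z \<in> set p" using S_vert T1 z by auto
        then have "e2 \<notin> H" using K False z by blast
        then have "f e2 \<noteq> \<alpha> \<and> f e2 \<noteq> \<beta>" using e12 unfolding H_def by auto
        then show ?thesis using f'S[OF T1] False unfolding f'_def by auto
      qed
    next
      case F1: False
      show ?thesis
      proof (cases "e2 \<in> S")
        case True
        have "z \<in> set p" using S_vert True z by auto
        then have "e1 \<notin> H" using K F1 z by blast
        then have "f e1 \<noteq> \<alpha> \<and> f e1 \<noteq> \<beta>" using e12 unfolding H_def by auto
        then show ?thesis using f'S[OF True] F1 unfolding f'_def by auto
      next
        case False
        then show ?thesis using F1 ne unfolding f'_def by auto
      qed
    qed
  qed
  have missy: "miss F f' y \<beta>" unfolding miss_def
  proof (intro ballI impI)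
    fix e assume e: "e \<in> F" "y \<in> e"
    show "f' e \<noteq> \<beta>"
    proof (cases "e \<in> S")
      case True
      have "f e \<noteq> \<alpha>" using my e unfolding miss_def by auto
      then show ?thesis using True ab unfolding f'_def by auto
    next
      case False
      have "y \<in> set p" using p0 pne by auto
      then have "e \<notin> H" using K False e by blast
      then show ?thesis using False e unfolding f'_def H_def by auto
    qed
  qed
  have rest: "miss F f z \<beta>" if z: "z \<noteq> y" "z \<noteq> u" "miss F f' z \<beta>" for z
  proof (cases "z \<in> set p")
    case False
    have "e \<notin> S" if "z \<in> e" for e using S_vert that False by auto
    then show ?thesis using z(3) unfolding miss_def f'_def by auto
  next
    case True
    then obtain i where i: "i < length p" "z = p!i" by (auto simp: in_set_conv_nth)
    have "i \<noteq> 0" using z(1) i(2) p0 by metis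
    moreover have "i \<noteq> m" using z(2) i(2) u_def by auto
    ultimately have i2: "0 < i" "i < m" using i(1) mlen by auto
    define a where "a = {p!(i-1), p!i}"
    define b where "b = {p!i, p!Suc i}"
    have aS: "a \<in> S"
    proof -
      have "Suc (i-1) < length p" "Suc (i-1) = i" using i2 mlen by auto
      then show ?thesis unfolding a_def S_eq by (metis (mono_tags, lifting) mem_Collect_eq)
    qed
    have bS: "b \<in> S" unfolding b_def S_eq using i2 mlen by auto
    have "p!(i-1) \<noteq> p!i" "p!(i-1) \<noteq> p!Suc i"
      using pd i2 mlen by (auto simp: nth_eq_iff_index_eq)
    then have "a \<noteq> b" unfolding a_def b_def by (metis insert_iff doubleton_eq_iff)
    moreover have "a \<in> F" "b \<in> F" using aS bS SH HF by auto
    moreover have "a \<inter> b \<noteq> {}" unfolding a_def b_def by auto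
    ultimately have "f' a \<noteq> f' b" using prop' unfolding proper_edge_colouring_def by blast
    then have "f' a = \<beta> \<or> f' b = \<beta>" using f'S[OF aS] f'S[OF bS] by auto
    moreover have "z \<in> a" "z \<in> b" unfolding a_def b_def using i by auto
    ultimately have False using z(3) \<open>a \<in> F\<close> \<open>b \<in> F\<close> unfolding miss_def by blast
    then show ?thesis ..
  qed
  show ?thesis using prop' missy rest by blast
qed

lemma nbr_ne: "\<forall>e\<in>E. card e = 2 \<Longrightarrow> {v,z} \<in> E \<Longrightarrow> z \<noteq> v"
proof
  assume "\<forall>e\<in>E. card e = 2" "{v,z} \<in> E" "z = v"
  then have "card {v} = 2" by auto
  then show False by simp
qed

lemma edges_at_nbr:
  assumes two: "\<forall>e\<in>E. card e = 2"
  shows "{e\<in>E. v\<in>e} = (\<lambda>z. {v,z}) ` {z. {v,z}\<in>E}"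
proof
  show "{e\<in>E. v\<in>e} \<subseteq> (\<lambda>z. {v,z}) ` {z. {v,z}\<in>E}"
  proof
    fix e assume e: "e \<in> {e\<in>E. v\<in>e}"
    then obtain w where "e = {v,w}" using card2_obtain[of e v] two by auto
    then show "e \<in> (\<lambda>z. {v,z}) ` {z. {v,z}\<in>E}" using e by auto
  qed
qed auto

lemma inj_dbl: "inj_on (\<lambda>z. {v,z}) A"
  by (auto simp: inj_on_def doubleton_eq_iff)

lemma degree_nbr:
  assumes fin: "finite E" and two: "\<forall>e\<in>E. card e = 2"
  shows "degree E v = card {z. {v,z}\<in>E}" and "finite {z. {v,z}\<in>E}"
proof -
  have "finite {e\<in>E. v\<in>e}" using fin by simp
  then have fe: "finite ((\<lambda>z. {v,z}) ` {z. {v,z}\<in>E})" using edges_at_nbr[OF two, of v] by simp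
  show "finite {z. {v,z}\<in>E}" by (rule finite_imageD[OF fe inj_dbl])
  show "degree E v = card {z. {v,z}\<in>E}"
    unfolding degree_def edges_at_nbr[OF two, of v] by (rule card_image[OF inj_dbl])
qed

lemma degree_pos_nbr:
  assumes "finite E" "{v,z} \<in> E" shows "degree E z \<ge> 1"
proof -
  have "{v,z} \<in> {e\<in>E. z\<in>e}" using assms by auto
  moreover have "finite {e\<in>E. z\<in>e}" using assms by auto
  ultimately have "0 < card {e\<in>E. z\<in>e}" by (auto simp: card_gt_0_iff)
  then show ?thesis unfolding degree_def by simp
qed

definition valid :: "'a set set \<Rightarrow> 'a \<Rightarrow> nat \<Rightarrow> ('a set \<Rightarrow> nat) \<Rightarrow> 'a \<Rightarrow> nat \<Rightarrow> bool" where
 "valid E v k f y a \<longleftrightarrow> {v,y} \<in> E \<and> a < k \<and> miss {e\<in>E. v\<notin>e} f y a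
   \<and> (\<forall>z. {v,z}\<in>E \<and> z \<noteq> y \<and> miss {e\<in>E. v\<notin>e} f z a \<longrightarrow> degree E z < k)
   \<and> card {z. {v,z}\<in>E \<and> z \<noteq> y \<and> ((\<not> miss {e\<in>E. v\<notin>e} f z a \<and> degree E z = k)
          \<or> (miss {e\<in>E. v\<notin>e} f z a \<and> Suc (degree E z) = k))} \<le> 1"

lemma reduce:
  assumes fin: "finite E" and two: "\<forall>e\<in>E. card e = 2"
    and pr: "proper_edge_colouring {e\<in>E. v\<notin>e} k f"
    and val: "valid E v k f y a"
    and nb: "\<forall>z. {v,z} \<in> E \<longrightarrow> degree E z \<le> k"
    and dv: "degree E v \<le> k"
    and IH: "\<And>E' k' f'. degree E' v < degree E v \<Longrightarrow> finite E' \<Longrightarrow> \<forall>e\<in>E'. card e = 2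
      \<Longrightarrow> proper_edge_colouring {e\<in>E'. v\<notin>e} k' f' \<Longrightarrow> degree E' v \<le> k'
      \<Longrightarrow> \<forall>z. {v,z} \<in> E' \<longrightarrow> degree E' z \<le> k'
      \<Longrightarrow> card {z. {v,z}\<in>E' \<and> degree E' z = k'} \<le> 1 \<Longrightarrow> \<exists>c. proper_edge_colouring E' k' c"
  shows "\<exists>c. proper_edge_colouring E k c"
proof -
  define F where "F = {e\<in>E. v\<notin>e}"
  define Fa where "Fa = {e\<in>F. f e = a}"
  define E' where "E' = E - insert {v,y} Fa"
  have vy: "{v,y} \<in> E" and ak: "a < k" and my: "miss F f y a"
    and c1: "\<And>z. {v,z}\<in>E \<Longrightarrow> z \<noteq> y \<Longrightarrow> miss F f z a \<Longrightarrow> degree E z < k"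
    and c2: "card {z. {v,z}\<in>E \<and> z \<noteq> y \<and> ((\<not> miss F f z a \<and> degree E z = k)
          \<or> (miss F f z a \<and> Suc (degree E z) = k))} \<le> 1"
    using val unfolding valid_def F_def by auto
  have yv: "y \<noteq> v" using nbr_ne[OF two vy] .
  have k1: "k \<ge> 1" using ak by simp
  have prF: "proper_edge_colouring F k f" using pr unfolding F_def .
  have finE': "finite E'" using fin unfolding E'_def by auto
  have twoE': "\<forall>e\<in>E'. card e = 2" using two unfolding E'_def by auto
  have FE': "{e\<in>E'. v\<notin>e} = F - Fa" unfolding E'_def F_def Fa_def by auto
  define g where "g e = (if f e > a then f e - 1 else f e)" for e
  have prg: "proper_edge_colouring {e\<in>E'. v\<notin>e} (k-1) g"
    unfolding FE' proper_edge_colouring_def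
  proof (intro conjI ballI impI)
    show "g ` (F - Fa) \<subseteq> {..<k - 1}"
    proof
      fix x assume "x \<in> g ` (F - Fa)"
      then obtain e where e: "e \<in> F" "f e \<noteq> a" "x = g e" unfolding Fa_def by auto
      have "f e < k" using prF e unfolding proper_edge_colouring_def by auto
      then show "x \<in> {..<k-1}" using e ak unfolding g_def by auto
    qed
    fix e1 e2 assume "e1 \<in> F - Fa" "e2 \<in> F - Fa" "e1 \<noteq> e2 \<and> e1 \<inter> e2 \<noteq> {}"
    then have "f e1 \<noteq> f e2" "f e1 \<noteq> a" "f e2 \<noteq> a"
      using prF unfolding proper_edge_colouring_def Fa_def by auto
    then show "g e1 \<noteq> g e2" unfolding g_def by auto
  qed
  have atv: "{e\<in>E'. v\<in>e} = {e\<in>E. v\<in>e} - {{v,y}}" unfolding E'_def Fa_def F_def by auto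
  have finv: "finite {e\<in>E. v\<in>e}" using fin by auto
  have vyin: "{v,y} \<in> {e\<in>E. v\<in>e}" using vy by auto
  have degv1: "degree E v \<ge> 1" using degree_pos_nbr[OF fin, of y v] vy by (simp add: insert_commute)
  have degv: "degree E' v = degree E v - 1" "degree E v \<ge> 1"
    unfolding degree_def atv using card_Diff_singleton[OF vyin] degv1 unfolding degree_def by auto
  have atz: "{e\<in>E'. z\<in>e} = {e\<in>E. z\<in>e} - {e\<in>Fa. z\<in>e}" if "z \<noteq> v" "z \<noteq> y" for z
    using that unfolding E'_def by auto
  have degz: "degree E' z = (if miss F f z a then degree E z else degree E z - 1)"
    if z: "{v,z}\<in>E" "z \<noteq> y" for z
  proof -
    have zv: "z \<noteq> v" using nbr_ne[OF two z(1)] .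
    show ?thesis
    proof (cases "miss F f z a")
      case True
      then have "{e\<in>Fa. z\<in>e} = {}" unfolding miss_def Fa_def by auto
      then have "{e\<in>E'. z\<in>e} = {e\<in>E. z\<in>e}" using atz[OF zv z(2)] by (simp only: Diff_empty)
      then show ?thesis using True unfolding degree_def by simp
    next
      case False
      then obtain e0 where e0: "e0 \<in> F" "z \<in> e0" "f e0 = a" unfolding miss_def by auto
      have "{e\<in>Fa. z\<in>e} = {e0}"
      proof
        show "{e\<in>Fa. z\<in>e} \<subseteq> {e0}" using proper_eq[OF prF _ e0(1) _ e0(2)] e0(3)
          unfolding Fa_def by auto
      qed (use e0 in \<open>auto simp: Fa_def\<close>)
      moreover have "e0 \<in> E" using e0 unfolding F_def by auto
      ultimately show ?thesis using False atz[OF zv z(2)] e0 fin unfolding degree_def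
        by (simp add: card_Diff_singleton)
    qed
  qed
  have nbE': "{v,z}\<in>E \<and> z \<noteq> y" if "{v,z}\<in>E'" for z
    using that yv unfolding E'_def by (auto simp: doubleton_eq_iff)
  obtain c' where c': "proper_edge_colouring E' (k-1) c'"
  proof -
    have "\<exists>c. proper_edge_colouring E' (k-1) c"
    proof (rule IH[OF _ finE' twoE' prg])
      show "degree E' v < degree E v" using degv by simp
      show "degree E' v \<le> k - 1" using degv dv by simp
      show "\<forall>z. {v,z} \<in> E' \<longrightarrow> degree E' z \<le> k - 1"
      proof (intro allI impI)
        fix z assume "{v,z} \<in> E'"
        then have z: "{v,z}\<in>E" "z \<noteq> y" using nbE' by auto
        show "degree E' z \<le> k - 1"
          using degz[OF z] c1[OF z] nb z(1) by (cases "miss F f z a") auto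
      qed
      have "{z. {v,z}\<in>E' \<and> degree E' z = k-1} \<subseteq> {z. {v,z}\<in>E \<and> z \<noteq> y \<and> ((\<not> miss F f z a \<and> degree E z = k)
          \<or> (miss F f z a \<and> Suc (degree E z) = k))}"
      proof
        fix z assume "z \<in> {z. {v,z}\<in>E' \<and> degree E' z = k-1}"
        then have z: "{v,z}\<in>E" "z \<noteq> y" "degree E' z = k - 1" using nbE' by auto
        have "degree E z \<ge> 1" using degree_pos_nbr[OF fin z(1)] .
        then show "z \<in> {z. {v,z}\<in>E \<and> z \<noteq> y \<and> ((\<not> miss F f z a \<and> degree E z = k)
          \<or> (miss F f z a \<and> Suc (degree E z) = k))}"
          using degz[OF z(1,2)] z k1 nb by (cases "miss F f z a") auto
      qed
      moreover have "finite {z. {v,z}\<in>E \<and> z \<noteq> y \<and> ((\<not> miss F f z a \<and> degree E z = k)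
          \<or> (miss F f z a \<and> Suc (degree E z) = k))}"
        using degree_nbr(2)[OF fin two, of v] by (rule rev_finite_subset) auto
      ultimately have "card {z. {v,z}\<in>E' \<and> degree E' z = k-1} \<le> card {z. {v,z}\<in>E \<and> z \<noteq> y \<and> ((\<not> miss F f z a \<and> degree E z = k)
          \<or> (miss F f z a \<and> Suc (degree E z) = k))}" by (intro card_mono)
      then show "card {z. {v,z}\<in>E' \<and> degree E' z = k-1} \<le> 1"
        using c2 by linarith
    qed
    then show ?thesis using that by blast
  qed
  define M where "M = insert {v,y} Fa"
  define c where "c e = (if e \<in> M then a else if c' e < a then c' e else Suc (c' e))" for e
  have EM: "E - M = E'" unfolding M_def E'_def by auto
  have "proper_edge_colouring E k c"
    unfolding proper_edge_colouring_def
  proof (intro conjI ballI impI)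
    show "c ` E \<subseteq> {..<k}"
    proof
      fix x assume "x \<in> c ` E"
      then obtain e where e: "e \<in> E" "x = c e" by auto
      show "x \<in> {..<k}"
      proof (cases "e \<in> M")
        case True then show ?thesis using e ak unfolding c_def by auto
      next
        case False
        then have "e \<in> E'" using e EM by auto
        then have "c' e < k - 1" using c' unfolding proper_edge_colouring_def by auto
        then show ?thesis using e False unfolding c_def by auto
      qed
    qed
    fix e1 e2 assume e: "e1 \<in> E" "e2 \<in> E" "e1 \<noteq> e2 \<and> e1 \<inter> e2 \<noteq> {}"
    then obtain z where z: "z \<in> e1" "z \<in> e2" by auto
    show "c e1 \<noteq> c e2"
    proof (cases "e1 \<in> M")
      case T1: True
      show ?thesis
      proof (cases "e2 \<in> M")
        case True
        have False
        proof (cases "e1 = {v,y}")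
          case True
          then have "e2 \<in> Fa" using \<open>e2 \<in> M\<close> e unfolding M_def by auto
          then have "v \<notin> e2" "f e2 = a" "e2 \<in> F" unfolding Fa_def F_def by auto
          then have "z = y" using z True by auto
          then show False using my \<open>e2 \<in> F\<close> \<open>f e2 = a\<close> z unfolding miss_def by auto
        next
          case False
          then have "e1 \<in> Fa" using T1 unfolding M_def by auto
          show False
          proof (cases "e2 = {v,y}")
            case True
            then have "v \<notin> e1" "f e1 = a" "e1 \<in> F" using \<open>e1 \<in> Fa\<close> unfolding Fa_def F_def by auto
            then have "z = y" using z True by auto
            then show False using my \<open>e1 \<in> F\<close> \<open>f e1 = a\<close> z unfolding miss_def by auto
          next
            case False
            then have "e2 \<in> Fa" using \<open>e2 \<in> M\<close> unfolding M_def by auto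
            then show False using proper_eq[OF prF, of e1 e2 z] \<open>e1 \<in> Fa\<close> z e unfolding Fa_def by auto
          qed
        qed
        then show ?thesis ..
      next
        case False
        then show ?thesis using T1 unfolding c_def by auto
      qed
    next
      case F1: False
      show ?thesis
      proof (cases "e2 \<in> M")
        case True
        then show ?thesis using F1 unfolding c_def by auto
      next
        case False
        then have "e1 \<in> E'" "e2 \<in> E'" using F1 e EM by auto
        then have "c' e1 \<noteq> c' e2" using c' e unfolding proper_edge_colouring_def by blast
        then show ?thesis using F1 False unfolding c_def by auto
      qed
    qed
  qed
  then show ?thesis by blast
qed

lemma card_filter_sum: "finite B \<Longrightarrow> card {b\<in>B. P b} = (\<Sum>b\<in>B. if P b then 1 else 0)"
  unfolding card_eq_sum by (rule sum.inter_filter)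

lemma double_count:
  assumes "finite A" "finite B"
  shows "(\<Sum>a\<in>A. card {b\<in>B. P a b}) = (\<Sum>b\<in>B. card {a\<in>A. P a b})"
proof -
  have "(\<Sum>a\<in>A. card {b\<in>B. P a b}) = (\<Sum>a\<in>A. \<Sum>b\<in>B. if P a b then 1 else 0)"
    using card_filter_sum[OF assms(2)] by simp
  also have "\<dots> = (\<Sum>b\<in>B. \<Sum>a\<in>A. if P a b then 1 else 0)" by (rule sum.swap)
  also have "\<dots> = (\<Sum>b\<in>B. card {a\<in>A. P a b})"
    using card_filter_sum[OF assms(1)] by simp
  finally show ?thesis .
qed

lemma missing_card:
  assumes fin: "finite E" and two: "\<forall>e\<in>E. card e = 2"
    and pr: "proper_edge_colouring {e\<in>E. v\<notin>e} k g" and z: "{v,z} \<in> E"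
  shows "card {a. a < k \<and> miss {e\<in>E. v\<notin>e} g z a} + degree E z = Suc k"
proof -
  define F where "F = {e\<in>E. v\<notin>e}"
  define Fz where "Fz = {e\<in>F. z\<in>e}"
  have prF: "proper_edge_colouring F k g" using pr unfolding F_def .
  have finFz: "finite Fz" unfolding Fz_def F_def using fin by auto
  have zv: "z \<noteq> v" using nbr_ne[OF two z] .
  have xvz: "x = {v,z}" if xx: "x \<in> E" "z \<in> x" "v \<in> x" for x
  proof -
    have "card x = 2" using two xx by blast
    then obtain w where "x = {z,w}" using card2_obtain[of x z] xx by blast
    then show ?thesis using xx zv by auto
  qed
  have "{e\<in>E. z\<in>e} = insert {v,z} Fz"
  proof
    show "{e\<in>E. z\<in>e} \<subseteq> insert {v,z} Fz"
    proof
      fix x assume x: "x \<in> {e\<in>E. z\<in>e}"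
      show "x \<in> insert {v,z} Fz"
      proof (cases "v \<in> x")
        case True then show ?thesis using xvz[of x] x by blast
      next
        case False then show ?thesis using x unfolding Fz_def F_def by blast
      qed
    qed
    show "insert {v,z} Fz \<subseteq> {e\<in>E. z\<in>e}" using z unfolding Fz_def F_def by blast
  qed
  moreover have "{v,z} \<notin> Fz" unfolding Fz_def F_def by auto
  ultimately have dz: "degree E z = Suc (card Fz)" unfolding degree_def using finFz by simp
  have inj: "inj_on g Fz"
  proof (rule inj_onI)
    fix e1 e2 assume "e1 \<in> Fz" "e2 \<in> Fz" "g e1 = g e2"
    then show "e1 = e2" using proper_eq[OF prF, of e1 e2 z] unfolding Fz_def by auto
  qed
  have sub: "g ` Fz \<subseteq> {..<k}" using prF unfolding proper_edge_colouring_def Fz_def by auto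
  have eq: "{a. a < k \<and> miss F g z a} = {..<k} - g ` Fz"
    unfolding miss_def Fz_def by auto
  have c1: "card ({..<k} - g ` Fz) = k - card (g ` Fz)"
    using card_Diff_subset[OF finite_imageI[OF finFz] sub] by simp
  have c2: "card (g ` Fz) = card Fz" using card_image[OF inj] .
  have c3: "card (g ` Fz) \<le> k" using card_mono[OF _ sub] by simp
  have "card {a. a < k \<and> miss F g z a} + degree E z = Suc k"
    unfolding eq c1 dz using c2 c3 by linarith
  then show ?thesis unfolding F_def .
qed

lemma find_valid:
  assumes fin: "finite E" and two: "\<forall>e\<in>E. card e = 2"
    and pr: "proper_edge_colouring {e\<in>E. v\<notin>e} k f"
    and dv: "degree E v \<le> k" and dpos: "0 < degree E v"
    and nb: "\<forall>z. {v,z} \<in> E \<longrightarrow> degree E z \<le> k"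
    and cw: "card {z. {v,z}\<in>E \<and> degree E z = k} \<le> 1"
  shows "\<exists>f' y a. proper_edge_colouring {e\<in>E. v\<notin>e} k f' \<and> valid E v k f' y a"
proof -
  define F where "F = {e\<in>E. v\<notin>e}"
  define N where "N = {z. {v,z}\<in>E}"
  define T where "T = {z\<in>N. k \<le> Suc (degree E z)}"
  define W where "W = {z\<in>N. degree E z = k}"
  have finN: "finite N" and cardN: "card N = degree E v"
    using degree_nbr[OF fin two, of v] unfolding N_def by auto
  have WT: "W \<subseteq> T" unfolding W_def T_def by auto
  have TN: "T \<subseteq> N" unfolding T_def by auto
  have finT: "finite T" using finN TN finite_subset by blast
  have finW: "finite W" using finT WT finite_subset by blast
  have cW: "card W \<le> 1" using cw unfolding W_def N_def by simp
  have finF: "finite F" unfolding F_def using fin by simp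
  have twoF: "\<forall>e\<in>F. card e = 2" unfolding F_def using two by simp
  have prF: "proper_edge_colouring F k f" using pr unfolding F_def .
  have Mc: "card {a. a < k \<and> miss F g z a} + degree E z = Suc k"
    if "proper_edge_colouring F k g" "z \<in> N" for g z
    using missing_card[OF fin two, of v k g z] that unfolding F_def N_def by simp
  have Mex: "\<exists>a. a < k \<and> miss F g z a" if "proper_edge_colouring F k g" "z \<in> N" for g z
  proof -
    have "degree E z \<le> k" using nb that(2) unfolding N_def by simp
    then have "card {a. a < k \<and> miss F g z a} \<noteq> 0" using Mc[OF that] by linarith
    then have "{a. a < k \<and> miss F g z a} \<noteq> {}" by (metis card.empty)
    then show ?thesis by blast
  qed
  have V1: "valid E v k g y0 a"
    if g: "proper_edge_colouring F k g" and y0: "y0 \<in> T" and yW: "W \<noteq> {} \<longrightarrow> y0 \<in> W"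
      and a: "a < k" "miss F g y0 a" and cc: "card {z\<in>T. z \<noteq> y0 \<and> miss F g z a} \<le> 1" for g y0 a
  proof -
    have Wy: "z = y0" if "z \<in> W" for z
    proof -
      have "y0 \<in> W" using yW that by auto
      have "\<forall>a1\<in>W. \<forall>a2\<in>W. a1 = a2" using card_le_Suc0_iff_eq[OF finW] cW by simp
      then show ?thesis using \<open>y0 \<in> W\<close> that by blast
    qed
    have s: "{z. {v,z}\<in>E \<and> z \<noteq> y0 \<and> ((\<not> miss F g z a \<and> degree E z = k)
          \<or> (miss F g z a \<and> Suc (degree E z) = k))} \<subseteq> {z\<in>T. z \<noteq> y0 \<and> miss F g z a}"
    proof
      fix z assume z: "z \<in> {z. {v,z}\<in>E \<and> z \<noteq> y0 \<and> ((\<not> miss F g z a \<and> degree E z = k)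
          \<or> (miss F g z a \<and> Suc (degree E z) = k))}"
      have "\<not> (degree E z = k)"
      proof
        assume "degree E z = k"
        then have "z \<in> W" using z unfolding W_def N_def by auto
        then have "z = y0" by (rule Wy)
        then show False using z by simp
      qed
      then show "z \<in> {z\<in>T. z \<noteq> y0 \<and> miss F g z a}" using z unfolding T_def N_def by auto
    qed
    have "finite {z\<in>T. z \<noteq> y0 \<and> miss F g z a}" using finT by simp
    then have c2: "card {z. {v,z}\<in>E \<and> z \<noteq> y0 \<and> ((\<not> miss F g z a \<and> degree E z = k)
          \<or> (miss F g z a \<and> Suc (degree E z) = k))} \<le> 1"
      using card_mono[OF _ s] cc by linarith
    have c1: "degree E z < k" if "{v,z}\<in>E" "z \<noteq> y0" "miss F g z a" for z
    proof -
      have "degree E z \<le> k" using nb that by simp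
      moreover have "degree E z \<noteq> k"
      proof
        assume "degree E z = k"
        then have "z \<in> W" using that unfolding W_def N_def by auto
        then have "z = y0" by (rule Wy)
        then show False using that by simp
      qed
      ultimately show ?thesis by simp
    qed
    have "{v,y0} \<in> E" using y0 TN unfolding N_def by auto
    then show ?thesis unfolding valid_def F_def[symmetric]
      using a c1 c2 by blast
  qed
  have V2: "valid E v k g z0 a"
    if a: "a < k" and zz: "{z\<in>T. miss F g z a} = {z0}" for g z0 a
  proof -
    have z0: "z0 \<in> T" "miss F g z0 a" using zz by auto
    have s: "{z. {v,z}\<in>E \<and> z \<noteq> z0 \<and> ((\<not> miss F g z a \<and> degree E z = k)
          \<or> (miss F g z a \<and> Suc (degree E z) = k))} \<subseteq> W"
    proof
      fix z assume z: "z \<in> {z. {v,z}\<in>E \<and> z \<noteq> z0 \<and> ((\<not> miss F g z a \<and> degree E z = k)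
          \<or> (miss F g z a \<and> Suc (degree E z) = k))}"
      have "\<not> (miss F g z a \<and> Suc (degree E z) = k)"
      proof
        assume "miss F g z a \<and> Suc (degree E z) = k"
        then have "z \<in> {z\<in>T. miss F g z a}" using z unfolding T_def N_def by auto
        then show False using zz z by auto
      qed
      then show "z \<in> W" using z unfolding W_def N_def by auto
    qed
    have c2: "card {z. {v,z}\<in>E \<and> z \<noteq> z0 \<and> ((\<not> miss F g z a \<and> degree E z = k)
          \<or> (miss F g z a \<and> Suc (degree E z) = k))} \<le> 1"
      using card_mono[OF finW s] cW by linarith
    have c1: "degree E z < k" if "{v,z}\<in>E" "z \<noteq> z0" "miss F g z a" for z
    proof -
      have "degree E z \<le> k" using nb that by simp
      moreover have "degree E z \<noteq> k"
      proof
        assume "degree E z = k"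
        then have "z \<in> {z\<in>T. miss F g z a}" using that unfolding T_def N_def by auto
        then show False using zz that by auto
      qed
      ultimately show ?thesis by simp
    qed
    have "{v,z0} \<in> E" using z0 TN unfolding N_def by auto
    then show ?thesis unfolding valid_def F_def[symmetric]
      using z0 a c1 c2 by blast
  qed
  have V3: "valid E v k g z0 a"
    if W0: "W = {}" and a: "a < k" and z0: "z0 \<in> {z\<in>T. miss F g z a}"
      and c: "card {z\<in>T. miss F g z a} = 2" for g z0 a
  proof -
    have s: "{z. {v,z}\<in>E \<and> z \<noteq> z0 \<and> ((\<not> miss F g z a \<and> degree E z = k)
          \<or> (miss F g z a \<and> Suc (degree E z) = k))} \<subseteq> {z\<in>T. miss F g z a} - {z0}"
    proof
      fix z assume z: "z \<in> {z. {v,z}\<in>E \<and> z \<noteq> z0 \<and> ((\<not> miss F g z a \<and> degree E z = k)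
          \<or> (miss F g z a \<and> Suc (degree E z) = k))}"
      have "degree E z \<noteq> k" using W0 z unfolding W_def N_def by auto
      then show "z \<in> {z\<in>T. miss F g z a} - {z0}" using z unfolding T_def N_def by auto
    qed
    have "card ({z\<in>T. miss F g z a} - {z0}) = 1" using c z0 finT by (simp add: card_Diff_singleton)
    moreover have "finite ({z\<in>T. miss F g z a} - {z0})" using finT by simp
    ultimately have c2: "card {z. {v,z}\<in>E \<and> z \<noteq> z0 \<and> ((\<not> miss F g z a \<and> degree E z = k)
          \<or> (miss F g z a \<and> Suc (degree E z) = k))} \<le> 1"
      using card_mono[OF _ s] by (metis le_refl)
    have c1: "degree E z < k" if "{v,z}\<in>E" for z
    proof -
      have "degree E z \<le> k" using nb that by simp
      moreover have "degree E z \<noteq> k" using W0 that unfolding W_def N_def by auto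
      ultimately show ?thesis by simp
    qed
    have "{v,z0} \<in> E" using z0 TN unfolding N_def by auto
    then show ?thesis unfolding valid_def F_def[symmetric]
      using z0 a c1 c2 by blast
  qed
  show ?thesis
  proof (cases "T = {}")
    case True
    have "N \<noteq> {}" using cardN dpos by auto
    then obtain y where y: "y \<in> N" by auto
    obtain a where a: "a < k" "miss F f y a" using Mex[OF prF y] by auto
    have "valid E v k f y a"
      unfolding valid_def F_def[symmetric]
    proof (intro conjI allI impI)
      show "{v,y} \<in> E" using y unfolding N_def by simp
      show "a < k" "miss F f y a" using a by auto
      fix z assume z: "{v,z}\<in>E \<and> z \<noteq> y \<and> miss F f z a"
      then have "z \<notin> T" using True by auto
      then show "degree E z < k" using z unfolding T_def N_def by auto
    next
      have emp: "{z. {v,z}\<in>E \<and> z \<noteq> y \<and> ((\<not> miss F f z a \<and> degree E z = k)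
          \<or> (miss F f z a \<and> Suc (degree E z) = k))} = {}"
        using True unfolding T_def N_def by auto
      show "card {z. {v,z}\<in>E \<and> z \<noteq> y \<and> ((\<not> miss F f z a \<and> degree E z = k)
          \<or> (miss F f z a \<and> Suc (degree E z) = k))} \<le> 1" unfolding emp by simp
    qed
    then show ?thesis using pr by blast
  next
    case Tne: False
    obtain y0 where y0: "y0 \<in> T" "W \<noteq> {} \<longrightarrow> y0 \<in> W"
    proof (cases "W = {}")
      case True then show ?thesis using that Tne by blast
    next
      case False then show ?thesis using that WT by blast
    qed
    show ?thesis
    proof (cases "\<exists>a. a < k \<and> miss F f y0 a \<and> card {z\<in>T. z \<noteq> y0 \<and> miss F f z a} \<le> 1")
      case True
      then show ?thesis using V1[OF prF y0] pr by blast
    next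
      case nV1: False
      show ?thesis
      proof (cases "\<exists>a. a < k \<and> card {z\<in>T. miss F f z a} = 1")
        case True
        then obtain a where a: "a < k" "card {z\<in>T. miss F f z a} = 1" by blast
        then obtain z0 where "{z\<in>T. miss F f z a} = {z0}" using card_1_singletonE[OF a(2)] by blast
        then show ?thesis using V2[OF a(1)] pr by blast
      next
        case nV2: False
        show ?thesis
        proof (cases "W = {} \<and> (\<exists>a. a < k \<and> card {z\<in>T. miss F f z a} = 2)")
          case True
          then obtain a where a: "a < k" "card {z\<in>T. miss F f z a} = 2" by blast
          have "{z\<in>T. miss F f z a} \<noteq> {}"
          proof
            assume e: "{z\<in>T. miss F f z a} = {}"
            have "card {z\<in>T. miss F f z a} = 0" unfolding e by simp
            then show False using a(2) by simp
          qed
          then obtain z0 where "z0 \<in> {z\<in>T. miss F f z a}" by blast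
          then show ?thesis using V3[of a z0 f] True a pr by blast
        next
          case nV3: False
          have "\<exists>\<beta><k. {z\<in>T. miss F f z \<beta>} = {}"
          proof (rule ccontr)
            assume "\<not> (\<exists>\<beta><k. {z\<in>T. miss F f z \<beta>} = {})"
            then have ne: "\<And>a. a < k \<Longrightarrow> {z\<in>T. miss F f z a} \<noteq> {}" by blast
            have ge2: "2 \<le> card {z\<in>T. miss F f z a}" if "a < k" for a
            proof -
              have "card {z\<in>T. miss F f z a} \<noteq> 0" using ne[OF that] finT by simp
              moreover have "card {z\<in>T. miss F f z a} \<noteq> 1" using nV2 that by blast
              ultimately show ?thesis by linarith
            qed
            have sumeq: "(\<Sum>a\<in>{..<k}. card {z\<in>T. miss F f z a}) = (\<Sum>z\<in>T. card {a\<in>{..<k}. miss F f z a})"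
              by (rule double_count) (use finT in auto)
            have "(\<Sum>z\<in>T. card {a\<in>{..<k}. miss F f z a} + (if z \<in> W then 1 else 0)) = (\<Sum>z\<in>T. 2)"
            proof (rule sum.cong)
              fix z assume z: "z \<in> T"
              have m: "card {a\<in>{..<k}. miss F f z a} + degree E z = Suc k"
                using Mc[OF prF, of z] z TN by auto
              have "degree E z \<le> k" "k \<le> Suc (degree E z)" using nb z unfolding T_def N_def by auto
              then show "card {a\<in>{..<k}. miss F f z a} + (if z \<in> W then 1 else 0) = 2"
                using m z unfolding W_def T_def by auto
            qed simp
            moreover have "(\<Sum>z\<in>T. card {a\<in>{..<k}. miss F f z a} + (if z \<in> W then 1 else 0))
               = (\<Sum>z\<in>T. card {a\<in>{..<k}. miss F f z a}) + (\<Sum>z\<in>T. (if z \<in> W then 1 else 0))"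
              by (rule sum.distrib)
            moreover have "(\<Sum>z\<in>T. (if z \<in> W then 1 else 0)) = card {z\<in>T. z \<in> W}"
              using card_filter_sum[OF finT, of "\<lambda>z. z \<in> W"] by simp
            moreover have "{z\<in>T. z \<in> W} = W" using WT by auto
            moreover have "(\<Sum>z\<in>T. (2::nat)) = 2 * card T" by simp
            ultimately have "(\<Sum>z\<in>T. card {a\<in>{..<k}. miss F f z a}) + card W = 2 * card T"
              by simp
            then have key: "(\<Sum>a\<in>{..<k}. card {z\<in>T. miss F f z a}) + card W = 2 * card T"
              using sumeq by simp
            have cT: "card T \<le> k" using card_mono[OF finN TN] cardN dv by simp
            show False
            proof (cases "W = {}")
              case True
              have ge3: "3 \<le> card {z\<in>T. miss F f z a}" if "a < k" for a
              proof -
                have "card {z\<in>T. miss F f z a} \<noteq> 2" using nV3 True that by blast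
                then show ?thesis using ge2[OF that] by linarith
              qed
              have "(\<Sum>a\<in>{..<k}. 3) \<le> (\<Sum>a\<in>{..<k}. card {z\<in>T. miss F f z a})"
                by (rule sum_mono) (use ge3 in auto)
              then have "3 * k \<le> 2 * card T" using key True by simp
              then show False using cT dpos dv by linarith
            next
              case False
              then have "card W \<ge> 1" using finW by (simp add: Suc_leI card_gt_0_iff)
              have "(\<Sum>a\<in>{..<k}. 2) \<le> (\<Sum>a\<in>{..<k}. card {z\<in>T. miss F f z a})"
                by (rule sum_mono) (use ge2 in auto)
              then have "2 * k + 1 \<le> 2 * card T" using key \<open>card W \<ge> 1\<close> by simp
              then show False using cT by linarith
            qed
          qed
          then obtain \<beta> where b: "\<beta> < k" "{z\<in>T. miss F f z \<beta>} = {}" by blast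
          have nmy: "\<not> miss F f y0 \<beta>" using b y0 by auto
          obtain a where a: "a < k" "miss F f y0 a" using Mex[OF prF] y0 TN by blast
          have "a \<noteq> \<beta>" using a nmy by auto
          from kempe[OF finF twoF prF a(1) b(1) this a(2) nmy]
          obtain f' u where f': "proper_edge_colouring F k f'" "miss F f' y0 \<beta>"
            "\<forall>z. z \<noteq> y0 \<and> z \<noteq> u \<and> miss F f' z \<beta> \<longrightarrow> miss F f z \<beta>" by blast
          have "{z\<in>T. z \<noteq> y0 \<and> miss F f' z \<beta>} \<subseteq> {u}"
            using f'(3) b(2) by auto
          then have "card {z\<in>T. z \<noteq> y0 \<and> miss F f' z \<beta>} \<le> card {u}"
            by (intro card_mono) auto
          then have "card {z\<in>T. z \<noteq> y0 \<and> miss F f' z \<beta>} \<le> 1" by simp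
          then have "valid E v k f' y0 \<beta>" using V1[OF f'(1) y0 b(1) f'(2)] by blast
          then show ?thesis using f'(1) unfolding F_def by blast
        qed
      qed
    qed
  qed
qed

lemma vizing_lemma:
  "degree E v = n \<Longrightarrow> finite E \<Longrightarrow> \<forall>e\<in>E. card e = 2 \<Longrightarrow> proper_edge_colouring {e\<in>E. v\<notin>e} k f
   \<Longrightarrow> degree E v \<le> k \<Longrightarrow> (\<forall>z. {v,z}\<in>E \<longrightarrow> degree E z \<le> k)
   \<Longrightarrow> card {z. {v,z}\<in>E \<and> degree E z = k} \<le> 1 \<Longrightarrow> \<exists>c. proper_edge_colouring E k c"
proof (induction n arbitrary: E k f rule: less_induct)
  case (less n)
  show ?case
  proof (cases "degree E v = 0")
    case True
    have "finite {e\<in>E. v\<in>e}" using less.prems(2) by simp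
    then have "{e\<in>E. v\<in>e} = {}" using True unfolding degree_def by simp
    then have "{e\<in>E. v\<notin>e} = E" by auto
    then show ?thesis using less.prems(4) by auto
  next
    case False
    obtain f' y a where fy: "proper_edge_colouring {e\<in>E. v\<notin>e} k f'" "valid E v k f' y a"
      using find_valid[OF less.prems(2,3,4,5)] False less.prems(6,7) by blast
    show ?thesis
    proof (rule reduce[OF less.prems(2,3) fy less.prems(6,5)])
      fix E' k' f''
      assume a: "degree E' v < degree E v" "finite E'" "\<forall>e\<in>E'. card e = 2"
        "proper_edge_colouring {e\<in>E'. v\<notin>e} k' f''" "degree E' v \<le> k'"
        "\<forall>z. {v,z} \<in> E' \<longrightarrow> degree E' z \<le> k'" "card {z. {v,z}\<in>E' \<and> degree E' z = k'} \<le> 1"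
      show "\<exists>c. proper_edge_colouring E' k' c"
        using less.IH[of "degree E' v" E' k' f''] a less.prems(1) by blast
    qed
  qed
qed

lemma vizing:
  "finite E \<Longrightarrow> \<forall>e\<in>E. card e = 2 \<Longrightarrow> (\<forall>v. degree E v < k) \<Longrightarrow> \<exists>c. proper_edge_colouring E k c"
proof (induction "card (\<Union>E)" arbitrary: E rule: less_induct)
  case less
  show ?case
  proof (cases "E = {}")
    case True
    then have "proper_edge_colouring E k (\<lambda>_. 0)" unfolding proper_edge_colouring_def by auto
    then show ?thesis by blast
  next
    case False
    then obtain e0 where e0: "e0 \<in> E" by auto
    have "card e0 = 2" using less.prems e0 by auto
    then obtain v where v: "v \<in> e0" by (metis card.empty ex_in_conv zero_neq_numeral)
    define E' where "E' = {e\<in>E. v\<notin>e}"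
    have fine: "\<forall>e\<in>E. finite e" using less.prems(2) by (metis card.infinite zero_neq_numeral)
    have finU: "finite (\<Union>E)" using fine less.prems(1) by simp
    have sub: "\<Union>E' \<subseteq> \<Union>E - {v}" unfolding E'_def by auto
    have "v \<in> \<Union>E" using v e0 by auto
    then have "card (\<Union>E - {v}) < card (\<Union>E)" using card_Diff1_less[OF finU] by blast
    then have lt: "card (\<Union>E') < card (\<Union>E)" using card_mono[OF _ sub] finU by (meson finite_Diff le_less_trans)
    have degle: "degree E' u \<le> degree E u" for u
      unfolding degree_def E'_def using less.prems(1) by (intro card_mono) auto
    obtain f where f: "proper_edge_colouring E' k f"
    proof -
      have "\<exists>c. proper_edge_colouring E' k c"
      proof (rule less.hyps[OF lt])
        show "finite E'" unfolding E'_def using less.prems(1) by simp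
        show "\<forall>e\<in>E'. card e = 2" unfolding E'_def using less.prems(2) by simp
        show "\<forall>u. degree E' u < k" using degle less.prems(3) le_less_trans by blast
      qed
      then show ?thesis using that by blast
    qed
    have "{z. {v,z}\<in>E \<and> degree E z = k} = {}" using less.prems(3) by (metis (mono_tags, lifting) Collect_empty_eq less_irrefl)
    then have c0: "card {z. {v,z}\<in>E \<and> degree E z = k} \<le> 1" by (simp only: card.empty)
    show ?thesis
      using vizing_lemma[OF refl less.prems(1,2) f[unfolded E'_def]] less.prems(3) c0
      by (simp add: less_imp_le)
  qed
qed

lemma path_edges_append:
  "path_edges (xs @ y # ys) = path_edges (xs @ [y]) @ path_edges (y # ys)"
proof (induction xs)
  case Nil then show ?case by simp
next
  case (Cons a xs)
  then show ?case by (cases xs) auto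
qed

lemma set_path_edges_rev: "set (path_edges (rev p)) = set (path_edges p)"
proof (induction p)
  case Nil then show ?case by simp
next
  case (Cons a p)
  show ?case
  proof (cases p)
    case Nil then show ?thesis by simp
  next
    case (Cons b p')
    have lb: "last (rev p) = b" "rev p \<noteq> []" using Cons by (auto simp: last_rev)
    have r2: "rev p = butlast (rev p) @ [b]"
      using append_butlast_last_id[OF lb(2)] lb(1) by simp
    have r: "rev (a # p) = butlast (rev p) @ b # [a]"
      using r2 by (metis append.assoc append_Cons append_Nil rev.simps(2))
    have "path_edges (rev (a # p)) = path_edges (butlast (rev p) @ [b]) @ path_edges [b, a]"
      unfolding r by (rule path_edges_append)
    also have "\<dots> = path_edges (rev p) @ [{b,a}]" using r2 by simp
    finally have "set (path_edges (rev (a # p))) = insert {a,b} (set (path_edges p))"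
      using Cons.IH by (auto simp: insert_commute)
    moreover have "path_edges (a # p) = {a,b} # path_edges p" using Cons by simp
    ultimately show ?thesis by simp
  qed
qed

lemma walk_to_path:
  "p \<noteq> [] \<Longrightarrow> \<exists>q. q \<noteq> [] \<and> hd q = hd p \<and> last q = last p \<and> set q \<subseteq> set p \<and> distinct q
     \<and> set (path_edges q) \<subseteq> set (path_edges p)"
proof (induction "length p" arbitrary: p rule: less_induct)
  case less
  show ?case
  proof (cases "distinct p")
    case True then show ?thesis using less.prems by blast
  next
    case False
    then obtain xs y ys zs where p: "p = xs @ [y] @ ys @ [y] @ zs" using not_distinct_decomp by blast
    define p' where "p' = xs @ [y] @ zs"
    have len: "length p' < length p" unfolding p p'_def by simp
    have ne: "p' \<noteq> []" unfolding p'_def by simp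
    have hd: "hd p' = hd p" unfolding p p'_def by (cases xs) auto
    have lst: "last p' = last p" unfolding p p'_def by (cases zs) auto
    have st: "set p' \<subseteq> set p" unfolding p p'_def by auto
    have e1: "path_edges p' = path_edges (xs @ [y]) @ path_edges (y # zs)"
      unfolding p'_def using path_edges_append[of xs y zs] by simp
    have "path_edges p = path_edges ((xs @ [y] @ ys) @ [y]) @ path_edges (y # zs)"
      unfolding p using path_edges_append[of "xs @ [y] @ ys" y zs] by simp
    moreover have "path_edges (xs @ [y] @ ys @ [y]) = path_edges (xs @ [y]) @ path_edges (y # ys @ [y])"
      using path_edges_append[of xs y "ys @ [y]"] by simp
    ultimately have "set (path_edges p') \<subseteq> set (path_edges p)" unfolding e1 by auto
    moreover obtain q where q: "q \<noteq> []" "hd q = hd p'" "last q = last p'" "set q \<subseteq> set p'" "distinct q"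
      "set (path_edges q) \<subseteq> set (path_edges p')" using less.hyps[OF len ne] by blast
    ultimately have "q \<noteq> [] \<and> hd q = hd p \<and> last q = last p \<and> set q \<subseteq> set p \<and> distinct q
     \<and> set (path_edges q) \<subseteq> set (path_edges p)" using hd lst st by auto
    then show ?thesis by blast
  qed
qed

lemma distinct_path_edges:
  assumes "distinct p" shows "distinct (path_edges p)"
proof -
  have "path_edges p ! i \<noteq> path_edges p ! j"
    if ij: "i < length (path_edges p)" "j < length (path_edges p)" "i < j" for i j
  proof
    assume eq: "path_edges p ! i = path_edges p ! j"
    have li: "Suc i < length p" "Suc j < length p" using ij length_path_edges[of p] by auto
    have "{p!i, p!Suc i} = {p!j, p!Suc j}" using eq path_edges_nth[OF ij(1)] path_edges_nth[OF ij(2)] by simp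
    then have "p!i = p!j \<or> p!i = p!Suc j" by (auto simp: doubleton_eq_iff)
    then have "i = j \<or> i = Suc j" using assms li by (auto simp: nth_eq_iff_index_eq)
    then show False using ij by auto
  qed
  then show ?thesis unfolding distinct_conv_nth
  proof (intro allI impI)
    fix i j assume H: "\<And>i j. i < length (path_edges p) \<Longrightarrow> j < length (path_edges p) \<Longrightarrow> i < j
      \<Longrightarrow> path_edges p ! i \<noteq> path_edges p ! j"
      and ij: "i < length (path_edges p)" "j < length (path_edges p)" "i \<noteq> j"
    show "path_edges p ! i \<noteq> path_edges p ! j"
    proof (cases "i < j")
      case True then show ?thesis using H ij by blast
    next
      case False then have "j < i" using ij by simp
      then show ?thesis using H[of j i] ij by auto
    qed
  qed
qed

lemma path_edges_Cons: "p \<noteq> [] \<Longrightarrow> path_edges (u # p) = {u, hd p} # path_edges p"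
  by (cases p) auto

lemma construct:
  assumes sg: "simple_graph V E" and cg: "connected_graph V E" and v0: "v0 \<in> V"
    and pc: "proper_edge_colouring E q c0"
  shows "\<exists>c. proper_edge_colouring E (q + card (V - {v0} - {z. {v0,z}\<in>E})) c
            \<and> properly_rainbow_connected V E c"
proof -
  have finV: "finite V" and EV: "\<And>e. e \<in> E \<Longrightarrow> e \<subseteq> V" and two: "\<forall>e\<in>E. card e = 2"
    using sg unfolding simple_graph_def by auto
  define N where "N = {z. {v0,z}\<in>E}"
  define D where "D = V - {v0} - N"
  define r where "r u = dist V E v0 u" for u
  have r_ex: "\<exists>p. is_path V E p v0 u \<and> length (path_edges p) = r u" if u: "u \<in> V" for u
  proof -
    have "\<exists>k p. is_path V E p v0 u \<and> length (path_edges p) = k"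
      using cg v0 u unfolding connected_graph_def by blast
    then show ?thesis unfolding r_def dist_def by (rule LeastI_ex)
  qed
  have r_le: "r u \<le> length (path_edges p)" if "is_path V E p v0 u" for p u
    unfolding r_def dist_def by (rule Least_le) (use that in blast)
  have r0: "x = v0" if x: "x \<in> V" "r x = 0" for x
  proof -
    obtain p where p: "is_path V E p v0 x" "length (path_edges p) = 0" using r_ex[OF x(1)] x(2) by auto
    then have pn: "p \<noteq> []" unfolding is_path_def by auto
    have "length p - 1 = 0" using p(2) length_path_edges[of p] by simp
    then have "length p = 1" using pn by (cases p) auto
    then obtain a where "p = [a]" by (metis One_nat_def length_0_conv length_Suc_conv)
    then show ?thesis using p unfolding is_path_def by auto
  qed
  have par_ex: "\<exists>w. {w,u}\<in>E \<and> w\<in>V \<and> r w < r u" if u: "u \<in> V" "u \<noteq> v0" for u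
  proof -
    obtain p where p: "is_path V E p v0 u" "length (path_edges p) = r u" using r_ex[OF u(1)] by auto
    have pne: "p \<noteq> []" and hp: "hd p = v0" and lp: "last p = u" and sp: "set p \<subseteq> V"
      and dp: "distinct p" and ep: "\<forall>e\<in>set (path_edges p). e \<in> E"
      using p(1) unfolding is_path_def by auto
    define L where "L = length p"
    have "L \<noteq> 0" using pne unfolding L_def by simp
    moreover have "L \<noteq> 1"
    proof
      assume "L = 1"
      then obtain a where "p = [a]" unfolding L_def by (metis One_nat_def length_0_conv length_Suc_conv)
      then show False using hp lp u by simp
    qed
    ultimately have L2: "L \<ge> 2" by simp
    define w where "w = p!(L-2)"
    define qq where "qq = butlast p"
    have lq: "length qq = L - 1" unfolding qq_def L_def by simp
    have qn: "qq!i = p!i" if "i < L - 1" for i using that unfolding qq_def L_def by (simp add: nth_butlast)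
    have qpath: "is_path V E qq v0 w"
      unfolding is_path_def
    proof (intro conjI)
      show "qq \<noteq> []" using lq L2 by auto
      have qne: "qq \<noteq> []" using lq L2 by auto
      have "qq!0 = p!0" using qn[of 0] L2 by simp
      then show "hd qq = v0" using hd_conv_nth[OF qne] hd_conv_nth[OF pne] hp by simp
      have "last qq = qq!(length qq - 1)" using last_conv_nth[OF qne] .
      moreover have "length qq - 1 = L - 2" using lq by simp
      moreover have "L - 2 < L - 1" using L2 by simp
      ultimately show "last qq = w" using qn[of "L-2"] unfolding w_def by simp
      show "set qq \<subseteq> V"
      proof
        fix x assume "x \<in> set qq"
        then have "x \<in> set p" unfolding qq_def by (rule in_set_butlastD)
        then show "x \<in> V" using sp by auto
      qed
      show "distinct qq" using dp unfolding qq_def by (rule distinct_butlast)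
      show "\<forall>e\<in>set (path_edges qq). e \<in> E"
      proof
        fix e assume "e \<in> set (path_edges qq)"
        then obtain i where i: "Suc i < length qq" "e = {qq!i, qq!Suc i}" unfolding set_path_edges by auto
        then have "e = {p!i, p!Suc i}" "Suc i < length p" using qn lq L_def by auto
        then have "e \<in> set (path_edges p)" unfolding set_path_edges by auto
        then show "e \<in> E" using ep by auto
      qed
    qed
    have "r w \<le> L - 2" using r_le[OF qpath] length_path_edges[of qq] lq by simp
    moreover have "r u = L - 1" using p(2) length_path_edges[of p] unfolding L_def by simp
    ultimately have "r w < r u" using L2 by simp
    moreover have "{w,u} \<in> set (path_edges p)"
    proof -
      have i: "Suc (L-2) < length p" "Suc (L-2) = L - 1" using L2 unfolding L_def by auto
      have "u = p!(L-1)" using lp pne unfolding L_def by (simp add: last_conv_nth)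
      then have "{w,u} = {p!(L-2), p!Suc (L-2)}" using i(2) unfolding w_def by simp
      then have "{w,u} \<in> {{p!i, p!Suc i} | i. Suc i < length p}" using i(1) by blast
      then show ?thesis unfolding set_path_edges .
    qed
    moreover have "w \<in> V" using sp L2 unfolding w_def L_def by (simp add: subset_iff)
    ultimately show ?thesis using ep by blast
  qed
  define par where "par u = (SOME w. {w,u}\<in>E \<and> w\<in>V \<and> r w < r u)" for u
  have par: "{par u, u}\<in>E \<and> par u \<in> V \<and> r (par u) < r u" if u: "u \<in> D" for u
  proof -
    have "u \<in> V" "u \<noteq> v0" using u unfolding D_def by auto
    then show ?thesis unfolding par_def by (rule someI_ex[OF par_ex])
  qed
  define pe where "pe u = {u, par u}" for u
  have pe_E: "pe u \<in> E" if "u \<in> D" for u using par[OF that] unfolding pe_def by (simp add: insert_commute)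
  have pe_nv0: "v0 \<notin> pe u" if u: "u \<in> D" for u
  proof -
    have "u \<noteq> v0" "u \<notin> N" using u unfolding D_def by auto
    moreover have "par u \<noteq> v0"
    proof
      assume "par u = v0"
      then have "{v0,u} \<in> E" using par[OF u] by simp
      then show False using \<open>u \<notin> N\<close> unfolding N_def by simp
    qed
    ultimately show ?thesis unfolding pe_def by auto
  qed
  have pe_inj: "inj_on pe D"
  proof (rule inj_onI)
    fix u1 u2 assume u: "u1 \<in> D" "u2 \<in> D" "pe u1 = pe u2"
    show "u1 = u2"
    proof (rule ccontr)
      assume ne: "u1 \<noteq> u2"
      then have "u1 = par u2" "u2 = par u1" using u(3) unfolding pe_def by (auto simp: doubleton_eq_iff)
      then show False using par[OF u(1)] par[OF u(2)] by simp
    qed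
  qed
  define TE where "TE = pe ` D"
  define S where "S = {e\<in>E. v0\<in>e}"
  have TES: "TE \<inter> S = {}" unfolding TE_def S_def using pe_nv0 by auto
  have TE_E: "TE \<subseteq> E" unfolding TE_def using pe_E by auto
  have finD: "finite D" unfolding D_def using finV by simp
  obtain idx where idx: "bij_betw idx D {0..<card D}" using ex_bij_betw_finite_nat[OF finD] by blast
  have idx_inj: "inj_on idx D" and idx_lt: "\<And>u. u \<in> D \<Longrightarrow> idx u < card D"
    using idx unfolding bij_betw_def by auto
  define c where "c e = (if e \<in> TE then q + idx (the_inv_into D pe e) else c0 e)" for e
  have c_pe: "c (pe u) = q + idx u" if "u \<in> D" for u
    unfolding c_def TE_def using that the_inv_into_f_f[OF pe_inj that] by simp
  have c0q: "c0 e < q" if "e \<in> E" for e using pc that unfolding proper_edge_colouring_def by auto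
  have c_nTE: "c e = c0 e" if "e \<notin> TE" for e unfolding c_def using that by simp
  have TEdiff: "c e1 \<noteq> c e2" if e: "e1 \<in> TE" "e2 \<in> TE" "e1 \<noteq> e2" for e1 e2
  proof -
    obtain u1 u2 where u: "u1 \<in> D" "u2 \<in> D" "e1 = pe u1" "e2 = pe u2" using e unfolding TE_def by auto
    then have "u1 \<noteq> u2" using e by auto
    then have "idx u1 \<noteq> idx u2" using idx_inj u inj_on_eq_iff by metis
    then show ?thesis using c_pe u by simp
  qed
  have TEbig: "c e \<ge> q" if "e \<in> TE" for e
    using that c_pe unfolding TE_def by auto
  have propc: "proper_edge_colouring E (q + card D) c"
    unfolding proper_edge_colouring_def
  proof (intro conjI ballI impI)
    show "c ` E \<subseteq> {..<q + card D}"
    proof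
      fix x assume "x \<in> c ` E"
      then obtain e where e: "e \<in> E" "x = c e" by auto
      show "x \<in> {..<q + card D}"
      proof (cases "e \<in> TE")
        case True
        then obtain u where "u \<in> D" "e = pe u" unfolding TE_def by auto
        then show ?thesis using c_pe idx_lt e by auto
      next
        case False then show ?thesis using c_nTE c0q e by fastforce
      qed
    qed
    fix e1 e2 assume e: "e1 \<in> E" "e2 \<in> E" "e1 \<noteq> e2 \<and> e1 \<inter> e2 \<noteq> {}"
    show "c e1 \<noteq> c e2"
    proof (cases "e1 \<in> TE")
      case T1: True
      show ?thesis
      proof (cases "e2 \<in> TE")
        case True then show ?thesis using TEdiff T1 e by blast
      next
        case False then show ?thesis using TEbig[OF T1] c_nTE c0q e by fastforce
      qed
    next
      case F1: False
      show ?thesis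
      proof (cases "e2 \<in> TE")
        case True then show ?thesis using TEbig[OF True] c_nTE[OF F1] c0q e by fastforce
      next
        case False then show ?thesis using c_nTE F1 pc e unfolding proper_edge_colouring_def by auto
      qed
    qed
  qed
  have cinj: "inj_on c (TE \<union> S)"
  proof (rule inj_onI)
    fix e1 e2 assume e: "e1 \<in> TE \<union> S" "e2 \<in> TE \<union> S" "c e1 = c e2"
    show "e1 = e2"
    proof (rule ccontr)
      assume ne: "e1 \<noteq> e2"
      show False
      proof (cases "e1 \<in> TE")
        case T1: True
        show False
        proof (cases "e2 \<in> TE")
          case True then show False using TEdiff T1 e ne by blast
        next
          case False then have "e2 \<in> S" using e by auto
          then show False using TEbig[OF T1] c_nTE[OF False] c0q e unfolding S_def by fastforce
        qed
      next
        case F1: False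
        then have "e1 \<in> S" using e by auto
        show False
        proof (cases "e2 \<in> TE")
          case True then show False using TEbig[OF True] c_nTE[OF F1] c0q e \<open>e1 \<in> S\<close> unfolding S_def by fastforce
        next
          case False then have "e2 \<in> S" using e by auto
          then have "c0 e1 \<noteq> c0 e2" using \<open>e1 \<in> S\<close> ne pc unfolding S_def proper_edge_colouring_def by blast
          then show False using c_nTE[OF F1] c_nTE[OF False] e by simp
        qed
      qed
    qed
  qed
  have walk: "\<forall>u. r u = n \<longrightarrow> u \<in> V \<longrightarrow> (\<exists>p. p \<noteq> [] \<and> hd p = u \<and> last p = v0 \<and> set p \<subseteq> V
      \<and> set (path_edges p) \<subseteq> TE \<union> S)" for n
  proof (induction n rule: less_induct)
    case (less n)
    show ?case
    proof (intro allI impI)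
      fix u assume u: "r u = n" "u \<in> V"
      show "\<exists>p. p \<noteq> [] \<and> hd p = u \<and> last p = v0 \<and> set p \<subseteq> V \<and> set (path_edges p) \<subseteq> TE \<union> S"
      proof (cases "u = v0")
        case True then show ?thesis using v0 by (intro exI[of _ "[v0]"]) auto
      next
        case nv: False
        show ?thesis
        proof (cases "u \<in> N")
          case True
          then have "{u,v0} \<in> S" unfolding N_def S_def by (auto simp: insert_commute)
          then show ?thesis using v0 u by (intro exI[of _ "[u,v0]"]) auto
        next
          case False
          then have uD: "u \<in> D" unfolding D_def using u nv by auto
          obtain p' where p': "p' \<noteq> []" "hd p' = par u" "last p' = v0" "set p' \<subseteq> V"
            "set (path_edges p') \<subseteq> TE \<union> S"
            using less.IH[of "r (par u)"] par[OF uD] u by blast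
          have "pe u \<in> TE" unfolding TE_def using uD by auto
          then have "set (path_edges (u # p')) \<subseteq> TE \<union> S"
            using p' path_edges_Cons[OF p'(1), of u] unfolding pe_def by auto
          then show ?thesis using p' u by (intro exI[of _ "u # p'"]) auto
        qed
      qed
    qed
  qed
  have prc: "properly_rainbow_connected V E c"
    unfolding properly_rainbow_connected_def
  proof (intro ballI impI)
    fix u w assume uw: "u \<in> V" "w \<in> V" "u \<noteq> w"
    obtain p1 where p1: "p1 \<noteq> []" "hd p1 = u" "last p1 = v0" "set p1 \<subseteq> V" "set (path_edges p1) \<subseteq> TE \<union> S"
      using walk uw(1) by blast
    obtain p2 where p2: "p2 \<noteq> []" "hd p2 = w" "last p2 = v0" "set p2 \<subseteq> V" "set (path_edges p2) \<subseteq> TE \<union> S"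
      using walk uw(2) by blast
    define p where "p = butlast p1 @ rev p2"
    have rne: "rev p2 \<noteq> []" using p2(1) by simp
    have "hd (rev p2) = v0" using p2(1,3) by (simp add: hd_rev)
    then have r2: "rev p2 = v0 # tl (rev p2)" using list.collapse[OF rne] by simp
    have p1e: "p1 = butlast p1 @ [v0]" using append_butlast_last_id[OF p1(1)] p1(3) by simp
    have "path_edges (butlast p1 @ v0 # tl (rev p2)) = path_edges (butlast p1 @ [v0]) @ path_edges (v0 # tl (rev p2))"
      by (rule path_edges_append)
    then have pe_eq: "path_edges p = path_edges p1 @ path_edges (rev p2)"
      unfolding p_def using r2 p1e by simp
    have pne: "p \<noteq> []" unfolding p_def using p2 by simp
    have "p = (butlast p1 @ [v0]) @ tl (rev p2)" unfolding p_def using r2 by simp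
    then have "p = p1 @ tl (rev p2)" using p1e by simp
    then have hp: "hd p = u" using p1 by simp
    have lp: "last p = w" unfolding p_def using p2 by (simp add: last_rev)
    have sp: "set p \<subseteq> V" unfolding p_def using p1 p2 by (auto dest: in_set_butlastD)
    have ep: "set (path_edges p) \<subseteq> TE \<union> S" unfolding pe_eq using p1 p2 set_path_edges_rev[of p2] by auto
    obtain qp where qp: "qp \<noteq> []" "hd qp = hd p" "last qp = last p" "set qp \<subseteq> set p" "distinct qp"
      "set (path_edges qp) \<subseteq> set (path_edges p)" using walk_to_path[OF pne] by blast
    have eq: "set (path_edges qp) \<subseteq> TE \<union> S" using qp ep by auto
    have "TE \<union> S \<subseteq> E" using TE_E unfolding S_def by auto
    then have "is_path V E qp u w" unfolding is_path_def using qp hp lp sp eq by auto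
    moreover have "distinct (map c (path_edges qp))"
      unfolding distinct_map using distinct_path_edges[OF qp(5)] inj_on_subset[OF cinj eq] by simp
    ultimately show "\<exists>p. rainbow_path V E c p u w" unfolding rainbow_path_def by blast
  qed
  show ?thesis using propc prc unfolding D_def N_def by blast
qed

lemma proper_deg_le:
  assumes "proper_edge_colouring E k c" "finite E"
  shows "degree E v \<le> k"
proof -
  have inj: "inj_on c {e\<in>E. v\<in>e}"
  proof (rule inj_onI)
    fix e1 e2 assume "e1 \<in> {e\<in>E. v\<in>e}" "e2 \<in> {e\<in>E. v\<in>e}" "c e1 = c e2"
    then show "e1 = e2" using proper_eq[OF assms(1), of e1 e2 v] by auto
  qed
  have "c ` {e\<in>E. v\<in>e} \<subseteq> {..<k}" using assms(1) unfolding proper_edge_colouring_def by auto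
  then have "card {e\<in>E. v\<in>e} \<le> card {..<k}" using card_inj_on_le[OF inj] by blast
  then show ?thesis unfolding degree_def by simp
qed

theorem theorem2p2:
  fixes V :: "'a set" and E :: "'a set set"
  assumes "simple_graph V E" and "connected_graph V E" and "card V \<ge> 2"
  shows "max (max_degree V E) (diam V E) \<le> prc V E
       \<and> prc V E \<le> chromatic_index E + (card V - 1 - max_degree V E)
       \<and> (class2 V E \<longrightarrow> chromatic_index E + (card V - 1 - max_degree V E) = card V)
       \<and> (class1 V E \<longrightarrow> chromatic_index E + (card V - 1 - max_degree V E) = card V - 1)"
proof -
  have finV: "finite V" and EV: "\<And>e. e \<in> E \<Longrightarrow> e \<subseteq> V" and two: "\<forall>e\<in>E. card e = 2"
    using assms(1) unfolding simple_graph_def by auto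
  have finE: "finite E"
  proof -
    have sub: "E \<subseteq> Pow V" using EV by auto
    have "finite (Pow V)" using finV by simp
    then show ?thesis using finite_subset[OF sub] by blast
  qed
  have Vne: "V \<noteq> {}" using assms(3) by auto
  define \<Delta> where "\<Delta> = max_degree V E"
  have "\<Delta> \<in> degree E ` V" unfolding \<Delta>_def max_degree_def using finV Vne by (intro Max_in) auto
  then obtain v0 where v0: "v0 \<in> V" "degree E v0 = \<Delta>" by auto
  have degle: "degree E v \<le> \<Delta>" for v
  proof (cases "v \<in> V")
    case True then show ?thesis unfolding \<Delta>_def max_degree_def using finV by simp
  next
    case False
    then have e: "{e\<in>E. v\<in>e} = {}" using EV by auto
    show ?thesis unfolding degree_def e by simp
  qed
  have "\<exists>c. proper_edge_colouring E (Suc \<Delta>) c"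
    using vizing[OF finE two] degle by (simp add: le_imp_less_Suc)
  define \<chi> where "\<chi> = chromatic_index E"
  have chi_prop: "\<exists>c. proper_edge_colouring E \<chi> c"
    unfolding \<chi>_def chromatic_index_def by (rule LeastI_ex) (use \<open>\<exists>c. proper_edge_colouring E (Suc \<Delta>) c\<close> in blast)
  have chi_le: "\<chi> \<le> Suc \<Delta>"
    unfolding \<chi>_def chromatic_index_def by (rule Least_le) (use \<open>\<exists>c. proper_edge_colouring E (Suc \<Delta>) c\<close> in blast)
  obtain c0 where c0: "proper_edge_colouring E \<chi> c0" using chi_prop by blast
  have chi_ge: "\<Delta> \<le> \<chi>" using proper_deg_le[OF c0 finE, of v0] v0 by simp
  define N where "N = {z. {v0,z}\<in>E}"
  have cardN: "card N = \<Delta>" using degree_nbr[OF finE two, of v0] v0 unfolding N_def by simp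
  have NV: "N \<subseteq> V - {v0}"
  proof
    fix z assume "z \<in> N"
    then have "{v0,z} \<in> E" unfolding N_def by simp
    then have "z \<noteq> v0" "z \<in> V" using EV[of "{v0,z}"] nbr_ne[OF two, of v0 z] by auto
    then show "z \<in> V - {v0}" by simp
  qed
  have cV1: "card (V - {v0}) = card V - 1" using v0 finV by simp
  have Dn: "\<Delta> \<le> card V - 1" using card_mono[OF _ NV] finV cardN cV1 by (metis finite_Diff)
  have finN: "finite N" using finite_subset[OF NV] finV by simp
  have cD: "card (V - {v0} - N) = card V - 1 - \<Delta>"
    using card_Diff_subset[OF finN NV] cardN cV1 by simp
  define K where "K = \<chi> + (card V - 1 - \<Delta>)"
  have PK: "\<exists>c. proper_edge_colouring E K c \<and> properly_rainbow_connected V E c"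
    using construct[OF assms(1,2) v0(1) c0] cD unfolding K_def N_def by simp
  have prc_le: "prc V E \<le> K" unfolding prc_def by (rule Least_le) (rule PK)
  have "\<exists>c. proper_edge_colouring E (prc V E) c \<and> properly_rainbow_connected V E c"
    unfolding prc_def by (rule LeastI_ex) (use PK in blast)
  then obtain c where c: "proper_edge_colouring E (prc V E) c" "properly_rainbow_connected V E c" by blast
  have D_le: "\<Delta> \<le> prc V E" using proper_deg_le[OF c(1) finE, of v0] v0 by simp
  have dist_le: "dist V E u w \<le> prc V E" if uw: "u \<in> V" "w \<in> V" for u w
  proof (cases "u = w")
    case True
    have "is_path V E [u] u w" unfolding is_path_def using True uw by simp
    then have "dist V E u w \<le> length (path_edges [u])" unfolding dist_def by (intro Least_le) blast
    then show ?thesis by simp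
  next
    case False
    then obtain p where p: "rainbow_path V E c p u w"
      using c(2) uw unfolding properly_rainbow_connected_def by blast
    then have ip: "is_path V E p u w" and dm: "distinct (map c (path_edges p))"
      unfolding rainbow_path_def by auto
    have "dist V E u w \<le> length (path_edges p)" unfolding dist_def by (intro Least_le) (use ip in blast)
    moreover have "length (path_edges p) = card (set (map c (path_edges p)))"
      using distinct_card[OF dm] by simp
    moreover have "set (map c (path_edges p)) \<subseteq> {..<prc V E}"
      using ip c(1) unfolding is_path_def proper_edge_colouring_def by force
    then have "card (set (map c (path_edges p))) \<le> card {..<prc V E}" by (intro card_mono) auto
    then have "card (set (map c (path_edges p))) \<le> prc V E" by simp
    ultimately show ?thesis by linarith
  qed
  have dset: "{dist V E u v | u v. u \<in> V \<and> v \<in> V} = (\<lambda>(u,v). dist V E u v) ` (V \<times> V)" by auto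
  have findset: "finite {dist V E u v | u v. u \<in> V \<and> v \<in> V}" unfolding dset using finV by simp
  have nedset: "{dist V E u v | u v. u \<in> V \<and> v \<in> V} \<noteq> {}" using Vne by auto
  have diam_le: "diam V E \<le> prc V E"
    unfolding diam_def Max_le_iff[OF findset nedset] using dist_le by blast
  have c1: "class1 V E \<longrightarrow> \<chi> + (card V - 1 - \<Delta>) = card V - 1"
  proof
    assume "class1 V E"
    then have "\<chi> = \<Delta>" unfolding class1_def \<chi>_def \<Delta>_def by simp
    then show "\<chi> + (card V - 1 - \<Delta>) = card V - 1" using Dn by linarith
  qed
  have c2: "class2 V E \<longrightarrow> \<chi> + (card V - 1 - \<Delta>) = card V"
  proof
    assume "class2 V E"
    then have "\<chi> \<noteq> \<Delta>" unfolding class2_def class1_def \<chi>_def \<Delta>_def by simp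
    then have "\<chi> = Suc \<Delta>" using chi_le chi_ge by simp
    then show "\<chi> + (card V - 1 - \<Delta>) = card V" using Dn assms(3) by linarith
  qed
  show ?thesis using D_le diam_le prc_le c1 c2 unfolding K_def \<chi>_def \<Delta>_def by simp
qed

end
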